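(* Let $X,Y$ be metric spaces and equip $X\times Y$ with the maximum metric. Then (i) $\dim_{\mathrm P}(X\times Y)\ge \dim_{\mathrm P}X+\vec{\dim}_{\mathrm P}Y$; (ii) $\vec{\dim}_{\mathrm P}(X\times Y)\ge \vec{\dim}_{\mathrm P}X+\vec{\dim}_{\mathrm P}Y$; (iii) $\underline{\dim}_{\mathrm P}(X\times Y)\ge \underline{\dim}_{\mathrm P}X+\underline{\dim}_{\mathrm P}Y$.
   Context: For a subset $E$ of a metric space and $\delta>0$, $N_\delta(E)$ is the minimal cardinality of a cover of $E$ by sets of diameter at most $\delta$. The lower and upper box dimensions of a nonempty set $E$ are $\underline{\dim}_{\mathrm B}E=\liminf_{\delta\to0}\frac{\log N_\delta(E)}{|\log\delta|}$ and $\overline{\dim}_{\mathrm B}E=\limsup_{\delta\to0}\frac{\log N_\delta(E)}{|\log\delta|}$. The (upper) packing dimension is $\dim_{\mathrm P}E=\inf\{\sup_n\overline{\dim}_{\mathrm B}E_n: E\subseteq\bigcup_n E_n\}$, the lower packing dimension is $\underline{\dim}_{\mathrm P}E=\inf\{\sup_n\underline{\dim}_{\mathrm B}E_n: E\subseteq\bigcup_nE_n\}$ (infima over countable covers), and the directed lower packing dimension is $\vec{\dim}_{\mathrm P}E=\inf\{\sup_n\underline{\dim}_{\mathrm B}E_n: E_n\uparrow E\}$, where $E_n\uparrow E$ means that $(E_n)_{n\in\mathbb N}$ is an increasing sequence of sets with union $E$. *)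

theory Defs
  imports "HOL-Analysis.Analysis"
begin

definition mdiam :: "('a \<Rightarrow> 'a \<Rightarrow> real) \<Rightarrow> 'a set \<Rightarrow> ereal" where
  "mdiam d A = Sup {ereal (d x y) | x y. x \<in> A \<and> y \<in> A}"

text \<open>N_delta(E): minimal cardinality of a cover of E by subsets of the space M of
  diameter at most delta (infinity if no finite such cover exists).\<close>
definition covnum :: "'a set \<Rightarrow> ('a \<Rightarrow> 'a \<Rightarrow> real) \<Rightarrow> real \<Rightarrow> 'a set \<Rightarrow> ereal" where
  "covnum M d \<delta> E = Inf {ereal (real (card \<C>)) | \<C>. finite \<C> \<and> (\<forall>C\<in>\<C>. C \<subseteq> M \<and> mdiam d C \<le> ereal \<delta>) \<and> E \<subseteq> \<Union>\<C>}"

definition box_ratio :: "'a set \<Rightarrow> ('a \<Rightarrow> 'a \<Rightarrow> real) \<Rightarrow> 'a set \<Rightarrow> real \<Rightarrow> ereal" where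
  "box_ratio M d E \<delta> =
     (let N = covnum M d \<delta> E in
      if N = \<infinity> then \<infinity> else ereal (ln (real_of_ereal N) / \<bar>ln \<delta>\<bar>))"

definition lower_box_dim :: "'a set \<Rightarrow> ('a \<Rightarrow> 'a \<Rightarrow> real) \<Rightarrow> 'a set \<Rightarrow> ereal" where
  "lower_box_dim M d E = Liminf (at_right 0) (box_ratio M d E)"

definition upper_box_dim :: "'a set \<Rightarrow> ('a \<Rightarrow> 'a \<Rightarrow> real) \<Rightarrow> 'a set \<Rightarrow> ereal" where
  "upper_box_dim M d E = Limsup (at_right 0) (box_ratio M d E)"

text \<open>Packing dimensions of a nonempty E \<subseteq> M. Box dimensions are only defined for
  nonempty sets, so the supremum ranges over the nonempty pieces E_n.\<close>
definition packing_dim :: "'a set \<Rightarrow> ('a \<Rightarrow> 'a \<Rightarrow> real) \<Rightarrow> 'a set \<Rightarrow> ereal" where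
  "packing_dim M d E = Inf {(SUP n\<in>{n. En n \<noteq> {}}. upper_box_dim M d (En n)) | En :: nat \<Rightarrow> 'a set.
       (\<forall>n. En n \<subseteq> M) \<and> E \<subseteq> (\<Union>n. En n)}"

definition lower_packing_dim :: "'a set \<Rightarrow> ('a \<Rightarrow> 'a \<Rightarrow> real) \<Rightarrow> 'a set \<Rightarrow> ereal" where
  "lower_packing_dim M d E = Inf {(SUP n\<in>{n. En n \<noteq> {}}. lower_box_dim M d (En n)) | En :: nat \<Rightarrow> 'a set.
       (\<forall>n. En n \<subseteq> M) \<and> E \<subseteq> (\<Union>n. En n)}"

definition directed_lower_packing_dim :: "'a set \<Rightarrow> ('a \<Rightarrow> 'a \<Rightarrow> real) \<Rightarrow> 'a set \<Rightarrow> ereal" where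
  "directed_lower_packing_dim M d E = Inf {(SUP n\<in>{n. En n \<noteq> {}}. lower_box_dim M d (En n)) | En :: nat \<Rightarrow> 'a set.
       incseq En \<and> (\<Union>n. En n) = E}"

definition max_metric :: "('a \<Rightarrow> 'a \<Rightarrow> real) \<Rightarrow> ('b \<Rightarrow> 'b \<Rightarrow> real) \<Rightarrow> ('a \<times> 'b) \<Rightarrow> ('a \<times> 'b) \<Rightarrow> real" where
  "max_metric d1 d2 p q = max (d1 (fst p) (fst q)) (d2 (snd p) (snd q))"

end

theory Submission
  imports Defs
begin


lemma covnum_ge1:
  assumes "E \<noteq> {}" shows "covnum M d \<delta> E \<ge> 1"
  unfolding covnum_def
proof (rule Inf_greatest)
  fix z assume "z \<in> {ereal (real (card \<C>)) | \<C>. finite \<C> \<and> (\<forall>C\<in>\<C>. C \<subseteq> M \<and> mdiam d C \<le> ereal \<delta>) \<and> E \<subseteq> \<Union>\<C>}"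
  then obtain C where z: "z = ereal (real (card C))" "finite C" "E \<subseteq> \<Union>C" by blast
  then have "C \<noteq> {}" using assms by auto
  with \<open>finite C\<close> have "card C \<ge> 1" by (simp add: Suc_leI card_gt_0_iff)
  then show "1 \<le> z" using z by simp
qed

lemma covnum_empty: "covnum M d \<delta> {} = 0"
proof -
  have "covnum M d \<delta> {} \<le> ereal (real (card ({}::'a set set)))"
    unfolding covnum_def by (rule Inf_lower) (auto intro!: exI[of _ "{}"])
  moreover have "covnum M d \<delta> {} \<ge> 0" unfolding covnum_def by (rule Inf_greatest) auto
  ultimately show ?thesis by (simp add: order_antisym zero_ereal_def)
qed

lemma box_ratio_ge:
  assumes "E \<noteq> {}" "0 < \<delta>" "\<delta> < 1" "covnum M d \<delta> E \<ge> ereal (\<delta> powr (-c))"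
  shows "box_ratio M d E \<delta> \<ge> ereal c"
proof (cases "covnum M d \<delta> E = \<infinity>")
  case True then show ?thesis by (simp add: box_ratio_def)
next
  case False
  have g1: "covnum M d \<delta> E \<ge> 1" using covnum_ge1[OF assms(1)] .
  then obtain N where N: "covnum M d \<delta> E = ereal N" using False
    by (cases "covnum M d \<delta> E") auto
  have "N \<ge> 1" using g1 N by simp
  have "N \<ge> \<delta> powr (-c)" using assms(4) N by simp
  moreover have "\<delta> powr (-c) > 0" using assms(2) by simp
  ultimately have "ln N \<ge> ln (\<delta> powr (-c))" using \<open>N \<ge> 1\<close> by (subst ln_le_cancel_iff) auto
  also have "ln (\<delta> powr (-c)) = - c * ln \<delta>" using assms(2) by (simp add: ln_powr)
  finally have h: "ln N \<ge> -c * ln \<delta>" .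
  have l: "ln \<delta> < 0" using assms by simp
  have a: "\<bar>ln \<delta>\<bar> = - ln \<delta>" using l by simp
  have pos: "- ln \<delta> > 0" using l by simp
  have "c * (- ln \<delta>) \<le> ln N" using h by simp
  then have "c \<le> ln N / (- ln \<delta>)" using pos_le_divide_eq[OF pos] by blast
  then have "c \<le> ln N / \<bar>ln \<delta>\<bar>" unfolding a .
  then show ?thesis using N False by (simp add: box_ratio_def)
qed

lemma box_ratio_gt:
  assumes "E \<noteq> {}" "0 < \<delta>" "\<delta> < 1" "box_ratio M d E \<delta> > ereal c"
  shows "covnum M d \<delta> E > ereal (\<delta> powr (-c))"
proof (cases "covnum M d \<delta> E = \<infinity>")
  case True then show ?thesis by simp
next
  case False
  have g1: "covnum M d \<delta> E \<ge> 1" using covnum_ge1[OF assms(1)] .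
  then obtain N where N: "covnum M d \<delta> E = ereal N" using False
    by (cases "covnum M d \<delta> E") auto
  have "N \<ge> 1" using g1 N by simp
  have l: "ln \<delta> < 0" using assms by simp
  have a: "\<bar>ln \<delta>\<bar> = - ln \<delta>" using l by simp
  have "c < ln N / (- ln \<delta>)" using assms(4) N a by (simp add: box_ratio_def)
  moreover have pos: "- ln \<delta> > 0" using l by simp
  ultimately have "c * (- ln \<delta>) < ln N" using pos_less_divide_eq[OF pos] by blast
  then have h: "ln N > -c * ln \<delta>" by simp
  have "ln (\<delta> powr (-c)) = - c * ln \<delta>" using assms(2) by (simp add: ln_powr)
  then have "ln N > ln (\<delta> powr (-c))" using h by simp
  moreover have "\<delta> powr (-c) > 0" using assms(2) by simp
  ultimately have "N > \<delta> powr (-c)" using \<open>N \<ge> 1\<close> by (subst (asm) ln_less_cancel_iff) auto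
  then show ?thesis using N by simp
qed



lemma L1:
  assumes "E \<noteq> {}" "ereal t < lower_box_dim M d E"
  shows "\<exists>r>0. \<forall>\<delta>. 0 < \<delta> \<and> \<delta> < r \<longrightarrow> covnum M d \<delta> E > ereal (\<delta> powr (-t))"
proof -
  have "eventually (\<lambda>\<delta>. box_ratio M d E \<delta> > ereal t) (at_right 0)"
    using less_LiminfD assms(2) unfolding lower_box_dim_def by blast
  then obtain b where b: "b > 0" "\<forall>y>0. y < b \<longrightarrow> box_ratio M d E y > ereal t"
    unfolding eventually_at_right_field by auto
  show ?thesis
    by (rule exI[of _ "min b 1"]) (use b box_ratio_gt[OF assms(1)] in auto)
qed

lemma L2:
  assumes "E \<noteq> {}" "r > 0" "\<forall>\<delta>. 0 < \<delta> \<and> \<delta> < r \<longrightarrow> covnum M d \<delta> E \<ge> ereal (\<delta> powr (-t))"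
  shows "ereal t \<le> lower_box_dim M d E"
  unfolding lower_box_dim_def
proof (rule Liminf_bounded)
  show "eventually (\<lambda>\<delta>. ereal t \<le> box_ratio M d E \<delta>) (at_right 0)"
    unfolding eventually_at_right_field
    by (rule exI[of _ "min r 1"]) (use assms box_ratio_ge[OF assms(1)] in auto)
qed

lemma U1:
  assumes "E \<noteq> {}" "ereal t < upper_box_dim M d E"
  shows "\<forall>r>0. \<exists>\<delta>. 0 < \<delta> \<and> \<delta> < r \<and> covnum M d \<delta> E > ereal (\<delta> powr (-t))"
proof (rule ccontr)
  assume "\<not> ?thesis"
  then obtain r where r: "r > 0" "\<forall>\<delta>. 0 < \<delta> \<and> \<delta> < r \<longrightarrow> \<not> covnum M d \<delta> E > ereal (\<delta> powr (-t))"
    by auto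
  have "eventually (\<lambda>\<delta>. box_ratio M d E \<delta> \<le> ereal t) (at_right 0)"
    unfolding eventually_at_right_field
    by (rule exI[of _ "min r 1"]) (use r box_ratio_gt[OF assms(1)] in \<open>auto simp: not_less[symmetric]\<close>)
  then have "upper_box_dim M d E \<le> ereal t" unfolding upper_box_dim_def by (rule Limsup_bounded)
  then show False using assms(2) by simp
qed

lemma U2:
  assumes "E \<noteq> {}" "\<forall>r>0. \<exists>\<delta>. 0 < \<delta> \<and> \<delta> < r \<and> covnum M d \<delta> E \<ge> ereal (\<delta> powr (-t))"
  shows "ereal t \<le> upper_box_dim M d E"
proof (rule ccontr)
  assume "\<not> ?thesis"
  then have "eventually (\<lambda>\<delta>. box_ratio M d E \<delta> < ereal t) (at_right 0)"
    unfolding upper_box_dim_def by (intro Limsup_lessD) simp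
  then obtain b where b: "b > 0" "\<forall>y>0. y < b \<longrightarrow> box_ratio M d E y < ereal t"
    unfolding eventually_at_right_field by auto
  obtain \<delta> where "0 < \<delta>" "\<delta> < min b 1" "covnum M d \<delta> E \<ge> ereal (\<delta> powr (-t))"
    using assms(2) b(1) by (metis min_less_iff_conj zero_less_one)
  then show False using b box_ratio_ge[OF assms(1), of \<delta>] by force
qed

lemma lbd_nonneg: assumes "E \<noteq> {}" shows "lower_box_dim M d E \<ge> 0"
proof -
  have "ereal 0 \<le> lower_box_dim M d E"
    by (rule L2[where r=1]) (use assms covnum_ge1[of E M d] in \<open>auto simp: one_ereal_def\<close>)
  then show ?thesis by (simp add: zero_ereal_def)
qed

lemma ubd_nonneg: assumes "E \<noteq> {}" shows "upper_box_dim M d E \<ge> 0"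
proof -
  have "ereal 0 \<le> upper_box_dim M d E"
  proof (rule U2[OF assms], intro allI impI)
    fix r :: real assume "r > 0"
    then show "\<exists>\<delta>. 0 < \<delta> \<and> \<delta> < r \<and> covnum M d \<delta> E \<ge> ereal (\<delta> powr (-0))"
      using assms covnum_ge1[of E M d] by (intro exI[of _ "r/2"]) (auto simp: one_ereal_def)
  qed
  then show ?thesis by (simp add: zero_ereal_def)
qed

lemma SC0:
  fixes C :: real
  assumes "e > 0" shows "\<exists>\<rho>>0. \<forall>\<delta>. 0 < \<delta> \<and> \<delta> < \<rho> \<longrightarrow> C \<le> \<delta> powr (-e)"
proof -
  define m where "m = max C 1"
  have m: "m > 0" "C \<le> m" unfolding m_def by (auto simp: max_def)
  define \<rho> where "\<rho> = m powr (-1/e)"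
  have "\<rho> > 0" unfolding \<rho>_def using m by simp
  moreover have "C \<le> \<delta> powr (-e)" if "0 < \<delta>" "\<delta> < \<rho>" for \<delta>
  proof -
    have "\<rho> powr (-e) < \<delta> powr (-e)"
      using that assms by (intro powr_less_mono2_neg) auto
    moreover have "\<rho> powr (-e) = m" unfolding \<rho>_def using m assms by (simp add: powr_powr)
    ultimately show ?thesis using m by simp
  qed
  ultimately show ?thesis by blast
qed

lemma SC:
  fixes t t' c K :: real
  assumes "t < t'" "c > 0"
  shows "\<exists>\<rho>>0. \<forall>\<delta>. 0 < \<delta> \<and> \<delta> < \<rho> \<longrightarrow> K * \<delta> powr (-t) \<le> (c*\<delta>) powr (-t')"
proof -
  have "t' - t > 0" using assms by simp
  from SC0[OF this, of "K * c powr t'"]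
  obtain \<rho> where \<rho>: "\<rho> > 0" "\<forall>\<delta>. 0 < \<delta> \<and> \<delta> < \<rho> \<longrightarrow> K * c powr t' \<le> \<delta> powr (-(t'-t))"
    by blast
  have "K * \<delta> powr (-t) \<le> (c*\<delta>) powr (-t')" if "0 < \<delta>" "\<delta> < \<rho>" for \<delta>
  proof -
    have "(c*\<delta>) powr (-t') = c powr (-t') * (\<delta> powr (-(t'-t)) * \<delta> powr (-t))"
      using that assms by (simp add: powr_mult powr_add[symmetric])
    also have "\<dots> \<ge> c powr (-t') * ((K * c powr t') * \<delta> powr (-t))"
      using \<rho> that by (intro mult_left_mono mult_right_mono) auto
    also have "c powr (-t') * ((K * c powr t') * \<delta> powr (-t)) = K * \<delta> powr (-t)"
      using assms by (simp add: powr_minus field_simps)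
    finally show ?thesis .
  qed
  then show ?thesis using \<rho> by blast
qed



definition sep :: "('a \<Rightarrow> 'a \<Rightarrow> real) \<Rightarrow> real \<Rightarrow> 'a set \<Rightarrow> bool" where
  "sep d \<delta> S = (\<forall>x\<in>S. \<forall>y\<in>S. x \<noteq> y \<longrightarrow> \<delta> < d x y)"

lemma mdiam_le: "x \<in> C \<Longrightarrow> y \<in> C \<Longrightarrow> mdiam d C \<le> ereal \<delta> \<Longrightarrow> d x y \<le> \<delta>"
proof -
  assume a: "x \<in> C" "y \<in> C" "mdiam d C \<le> ereal \<delta>"
  have "ereal (d x y) \<le> mdiam d C" unfolding mdiam_def by (rule Sup_upper) (use a in blast)
  then have "ereal (d x y) \<le> ereal \<delta>" using a(3) by (rule order_trans)
  then show ?thesis by simp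
qed

lemma covnum_le_card:
  assumes "finite \<C>" "\<forall>C\<in>\<C>. C \<subseteq> M \<and> mdiam d C \<le> ereal \<delta>" "E \<subseteq> \<Union>\<C>"
  shows "covnum M d \<delta> E \<le> ereal (real (card \<C>))"
  unfolding covnum_def by (rule Inf_lower) (use assms in blast)

lemma C1:
  assumes "S \<subseteq> E" "finite S" "sep d \<delta> S"
  shows "ereal (real (card S)) \<le> covnum M d \<delta> E"
  unfolding covnum_def
proof (rule Inf_greatest)
  fix z assume "z \<in> {ereal (real (card \<C>)) | \<C>. finite \<C> \<and> (\<forall>C\<in>\<C>. C \<subseteq> M \<and> mdiam d C \<le> ereal \<delta>) \<and> E \<subseteq> \<Union>\<C>}"
  then obtain \<C> where z: "z = ereal (real (card \<C>))" "finite \<C>" "\<forall>C\<in>\<C>. C \<subseteq> M \<and> mdiam d C \<le> ereal \<delta>" "E \<subseteq> \<Union>\<C>" by blast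
  have "\<forall>s\<in>S. \<exists>C\<in>\<C>. s \<in> C" using z(4) assms(1) by blast
  then obtain f where f: "\<forall>s\<in>S. f s \<in> \<C> \<and> s \<in> f s" by metis
  have "inj_on f S"
  proof (rule inj_onI)
    fix s s' assume "s \<in> S" "s' \<in> S" "f s = f s'"
    then have "d s s' \<le> \<delta>" using f z(3) mdiam_le[of s "f s" s' d \<delta>] by auto
    then show "s = s'" using assms(3) \<open>s \<in> S\<close> \<open>s' \<in> S\<close> unfolding sep_def by force
  qed
  then have "card S \<le> card \<C>" using f z(2) by (intro card_inj_on_le) auto
  then show "ereal (real (card S)) \<le> z" using z(1) by simp
qed

lemma C2:
  assumes ms: "Metric_space M d" and "E \<subseteq> M" "\<delta> > 0"
    and gt: "covnum M d (2*\<delta>) E > ereal (real a)"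
  shows "\<exists>S\<subseteq>E. finite S \<and> sep d \<delta> S \<and> a < card S"
proof (rule ccontr)
  assume "\<not> ?thesis"
  then have bd: "\<And>S. S \<subseteq> E \<Longrightarrow> finite S \<Longrightarrow> sep d \<delta> S \<Longrightarrow> card S \<le> a" by force
  define K where "K = {card S | S. S \<subseteq> E \<and> finite S \<and> sep d \<delta> S}"
  have "K \<subseteq> {..a}"
  proof
    fix k assume "k \<in> K"
    then obtain S where "k = card S" "S \<subseteq> E" "finite S" "sep d \<delta> S" unfolding K_def by blast
    then show "k \<in> {..a}" using bd by simp
  qed
  then have fK: "finite K" using finite_subset by blast
  have "0 \<in> K" unfolding K_def by (rule CollectI, rule exI[of _ "{}"]) (auto simp: sep_def)
  then have "Max K \<in> K" using fK by (intro Max_in) auto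
  then obtain S0 where S0: "Max K = card S0" "S0 \<subseteq> E" "finite S0" "sep d \<delta> S0"
    unfolding K_def by blast
  have near: "\<exists>s\<in>S0. d s e \<le> \<delta>" if "e \<in> E" for e
  proof (rule ccontr)
    assume nn: "\<not> ?thesis"
    have "e \<notin> S0"
    proof
      assume "e \<in> S0"
      then have "d e e \<le> \<delta>" using that assms(2,3) Metric_space.zero[OF ms, of e e] by auto
      then show False using nn \<open>e \<in> S0\<close> by blast
    qed
    have "sep d \<delta> (insert e S0)" unfolding sep_def
    proof (intro ballI impI)
      fix x y assume xy: "x \<in> insert e S0" "y \<in> insert e S0" "x \<noteq> y"
      then consider "x = e" "y \<in> S0" | "y = e" "x \<in> S0" | "x \<in> S0" "y \<in> S0" by blast
      then show "\<delta> < d x y"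
      proof cases
        case 1 then show ?thesis using nn Metric_space.commute[OF ms, of e y] by force
      next
        case 2 then show ?thesis using nn by force
      next
        case 3 then show ?thesis using S0(4) xy(3) unfolding sep_def by blast
      qed
    qed
    then have "card (insert e S0) \<in> K" unfolding K_def using S0 that by blast
    then have "card (insert e S0) \<le> Max K" using fK by simp
    then show False using S0 \<open>e \<notin> S0\<close> by simp
  qed
  define \<C> where "\<C> = (\<lambda>s. {z\<in>M. d s z \<le> \<delta>}) ` S0"
  have "\<forall>C\<in>\<C>. C \<subseteq> M \<and> mdiam d C \<le> ereal (2*\<delta>)"
  proof
    fix C assume "C \<in> \<C>"
    then obtain s where s: "s \<in> S0" "C = {z\<in>M. d s z \<le> \<delta>}" unfolding \<C>_def by blast
    have sM: "s \<in> M" using s S0 assms(2) by blast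
    have "mdiam d C \<le> ereal (2*\<delta>)" unfolding mdiam_def
    proof (rule Sup_least, clarify)
      fix x y assume "x \<in> C" "y \<in> C"
      then have "d x y \<le> d x s + d s y" "d s x \<le> \<delta>" "d s y \<le> \<delta>" "x \<in> M" "y \<in> M"
        using s sM Metric_space.triangle[OF ms] by auto
      then show "ereal (d x y) \<le> ereal (2*\<delta>)" using Metric_space.commute[OF ms, of x s] by simp
    qed
    then show "C \<subseteq> M \<and> mdiam d C \<le> ereal (2*\<delta>)" using s by auto
  qed
  moreover have "E \<subseteq> \<Union>\<C>"
  proof
    fix e assume "e \<in> E"
    then obtain s where "s \<in> S0" "d s e \<le> \<delta>" using near by blast
    then show "e \<in> \<Union>\<C>" unfolding \<C>_def using \<open>e \<in> E\<close> assms(2) by blast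
  qed
  moreover have "finite \<C>" unfolding \<C>_def using S0 by simp
  ultimately have "covnum M d (2*\<delta>) E \<le> ereal (real (card \<C>))" using covnum_le_card by blast
  moreover have "card \<C> \<le> card S0" unfolding \<C>_def using S0 card_image_le by blast
  moreover have "card S0 \<le> a" using bd S0 by blast
  ultimately have "real (card \<C>) \<le> real a" "covnum M d (2*\<delta>) E \<le> ereal (real (card \<C>))" by auto
  then have "covnum M d (2*\<delta>) E \<le> ereal (real a)" using order_trans ereal_less_eq(3) by metis
  then show False using gt by simp
qed

lemma covnum_mono: "E \<subseteq> F \<Longrightarrow> covnum M d \<delta> E \<le> covnum M d \<delta> F"
  unfolding covnum_def by (rule Inf_superset_mono) blast

lemma FU:
  assumes "finite J" "\<forall>j\<in>J. covnum M d \<delta> (En j) < ereal K"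
  shows "covnum M d \<delta> (\<Union>j\<in>J. En j) \<le> ereal (real (card J) * K)"
proof -
  define P where "P = (\<lambda>j \<C>. finite \<C> \<and> (\<forall>C\<in>\<C>. C \<subseteq> M \<and> mdiam d C \<le> ereal \<delta>) \<and> En j \<subseteq> \<Union>\<C> \<and> real (card \<C>) < K)"
  have "\<forall>j\<in>J. \<exists>\<C>. P j \<C>"
  proof
    fix j assume "j \<in> J"
    then have "covnum M d \<delta> (En j) < ereal K" using assms by blast
    then obtain z where "z \<in> {ereal (real (card \<C>)) | \<C>. finite \<C> \<and> (\<forall>C\<in>\<C>. C \<subseteq> M \<and> mdiam d C \<le> ereal \<delta>) \<and> En j \<subseteq> \<Union>\<C>}" "z < ereal K"
      unfolding covnum_def Inf_less_iff by blast
    then obtain \<C> where "finite \<C>" "\<forall>C\<in>\<C>. C \<subseteq> M \<and> mdiam d C \<le> ereal \<delta>" "En j \<subseteq> \<Union>\<C>" "ereal (real (card \<C>)) < ereal K"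
      by blast
    then have "P j \<C>" unfolding P_def by simp
    then show "\<exists>\<C>. P j \<C>" by blast
  qed
  from bchoice[OF this] obtain G where G: "\<forall>j\<in>J. P j (G j)" by (elim exE)
  define \<C> where "\<C> = (\<Union>j\<in>J. G j)"
  have G1: "\<And>j. j \<in> J \<Longrightarrow> finite (G j)" using G unfolding P_def by simp
  have G2: "\<And>j C. j \<in> J \<Longrightarrow> C \<in> G j \<Longrightarrow> C \<subseteq> M \<and> mdiam d C \<le> ereal \<delta>" using G unfolding P_def by simp
  have G3: "\<And>j. j \<in> J \<Longrightarrow> En j \<subseteq> \<Union>(G j)" using G unfolding P_def by simp
  have f: "finite \<C>" using G1 assms(1) unfolding \<C>_def by simp
  have c: "\<forall>C\<in>\<C>. C \<subseteq> M \<and> mdiam d C \<le> ereal \<delta>" unfolding \<C>_def using G2 by blast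
  have u: "(\<Union>j\<in>J. En j) \<subseteq> \<Union>\<C>" unfolding \<C>_def using G3 by blast
  have 1: "covnum M d \<delta> (\<Union>j\<in>J. En j) \<le> ereal (real (card \<C>))"
    using covnum_le_card[OF f c u] .
  have "card \<C> \<le> (\<Sum>j\<in>J. card (G j))" unfolding \<C>_def using assms(1) card_UN_le by blast
  then have 2: "real (card \<C>) \<le> (\<Sum>j\<in>J. real (card (G j)))"
    by (metis of_nat_le_iff of_nat_sum)
  have 3: "(\<Sum>j\<in>J. real (card (G j))) \<le> (\<Sum>j\<in>J. K)" using G unfolding P_def by (intro sum_mono) (simp add: less_imp_le)
  have "real (card \<C>) \<le> real (card J) * K" using 2 3 by simp
  then have "ereal (real (card \<C>)) \<le> ereal (real (card J) * K)" by simp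
  then show ?thesis using 1 by (rule order_trans[rotated])
qed



lemma PL:
  assumes msX: "Metric_space X dX" and msY: "Metric_space Y dY"
    and EXY: "E \<subseteq> X \<times> Y" and AX: "A \<subseteq> X" and \<delta>: "\<delta> > 0" and u: "u \<ge> 0" and v: "v \<ge> 0"
    and hA: "covnum X dX (2*\<delta>) A > ereal u"
    and hS: "\<forall>x\<in>A. covnum Y dY (2*\<delta>) {y. (x,y) \<in> E} > ereal v"
  shows "covnum (X \<times> Y) (max_metric dX dY) \<delta> E > ereal (u * v)"
proof -
  define a where "a = nat \<lfloor>u\<rfloor>"
  define b where "b = nat \<lfloor>v\<rfloor>"
  have ua: "real a \<le> u" "u < real a + 1" using u unfolding a_def by linarith+
  have vb: "real b \<le> v" "v < real b + 1" using v unfolding b_def by linarith+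
  have "ereal (real a) < covnum X dX (2*\<delta>) A" using hA ua(1) by (meson ereal_less_eq(3) le_less_trans)
  from C2[OF msX AX \<delta> this] obtain S where S: "S \<subseteq> A" "finite S" "sep dX \<delta> S" "a < card S" by blast
  have "\<forall>x\<in>S. \<exists>T. T \<subseteq> {y. (x,y) \<in> E} \<and> finite T \<and> sep dY \<delta> T \<and> b < card T"
  proof
    fix x assume "x \<in> S"
    have sub: "{y. (x,y) \<in> E} \<subseteq> Y" using EXY by blast
    have "ereal (real b) < covnum Y dY (2*\<delta>) {y. (x,y) \<in> E}"
      using hS \<open>x \<in> S\<close> S(1) vb(1) by (meson ereal_less_eq(3) le_less_trans subsetD)
    from C2[OF msY sub \<delta> this] show "\<exists>T. T \<subseteq> {y. (x,y) \<in> E} \<and> finite T \<and> sep dY \<delta> T \<and> b < card T" .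
  qed
  from bchoice[OF this] obtain T where T: "\<forall>x\<in>S. T x \<subseteq> {y. (x,y) \<in> E} \<and> finite (T x) \<and> sep dY \<delta> (T x) \<and> b < card (T x)"
    by (elim exE)
  define P where "P = Sigma S T"
  have PE: "P \<subseteq> E" unfolding P_def using T by blast
  have fP: "finite P" unfolding P_def using S(2) T by (intro finite_SigmaI) auto
  have sP: "sep (max_metric dX dY) \<delta> P" unfolding sep_def
  proof (intro ballI impI)
    fix p q assume pq: "p \<in> P" "q \<in> P" "p \<noteq> q"
    obtain x y x' y' where p: "p = (x,y)" and q: "q = (x',y')" by fastforce
    have xs: "x \<in> S" "x' \<in> S" "y \<in> T x" "y' \<in> T x'" using pq p q unfolding P_def by auto
    show "\<delta> < max_metric dX dY p q"
    proof (cases "x = x'")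
      case True
      then have "y \<noteq> y'" using pq p q by simp
      then have "\<delta> < dY y y'" using T xs True unfolding sep_def by blast
      then show ?thesis unfolding p q max_metric_def by simp
    next
      case False
      then have "\<delta> < dX x x'" using S(3) xs unfolding sep_def by blast
      then show ?thesis unfolding p q max_metric_def by simp
    qed
  qed
  have "card P = (\<Sum>x\<in>S. card (T x))" unfolding P_def using S(2) T by (intro card_SigmaI) auto
  also have "\<dots> \<ge> (\<Sum>x\<in>S. Suc b)" using T by (intro sum_mono) (simp add: Suc_leI)
  finally have "card P \<ge> card S * Suc b" by simp
  moreover have "card S * Suc b \<ge> Suc a * Suc b" using S(4) by (intro mult_le_mono1) simp
  ultimately have cP: "real (card P) \<ge> (real a + 1) * (real b + 1)"
    by (metis (no_types, lifting) le_trans of_nat_Suc of_nat_le_iff of_nat_mult add.commute)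
  have "u * v < (real a + 1) * (real b + 1)"
    using ua vb u v by (intro mult_strict_mono') auto
  then have "u * v < real (card P)" using cP by linarith
  then have "ereal (u * v) < ereal (real (card P))" by simp
  also have "\<dots> \<le> covnum (X \<times> Y) (max_metric dX dY) \<delta> E" using C1[OF PE fP sP] .
  finally show ?thesis .
qed



lemma covnum_pos_nonempty: assumes "covnum M d \<delta> S > ereal (c powr e)" shows "S \<noteq> {}"
proof
  assume "S = {}"
  then have "ereal (c powr e) < ereal 0" using assms covnum_empty[of M d \<delta>] by (simp add: zero_ereal_def)
  then show False by simp
qed

lemma LGOOD:
  assumes "S \<noteq> {}" "ereal t' < lower_box_dim M d S" "t < t'"
  shows "\<exists>k. \<forall>\<delta>. 0 < \<delta> \<and> \<delta> < 1 / real (Suc k) \<longrightarrow> covnum M d (2*\<delta>) S > ereal (\<delta> powr (-t))"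
proof -
  obtain r where r: "r > 0" "\<forall>\<delta>. 0 < \<delta> \<and> \<delta> < r \<longrightarrow> covnum M d \<delta> S > ereal (\<delta> powr (-t'))"
    using L1[OF assms(1,2)] by blast
  obtain \<rho> where \<rho>: "\<rho> > 0" "\<forall>\<delta>. 0 < \<delta> \<and> \<delta> < \<rho> \<longrightarrow> 1 * \<delta> powr (-t) \<le> (2*\<delta>) powr (-t')"
    using SC[OF assms(3), of 2 1] by auto
  have "min (r/2) \<rho> > 0" using r \<rho> by simp
  then obtain k where k: "inverse (real (Suc k)) < min (r/2) \<rho>" using reals_Archimedean by blast
  show ?thesis
  proof (intro exI allI impI)
    fix \<delta> :: real assume d: "0 < \<delta> \<and> \<delta> < 1 / real (Suc k)"
    have "1 / real (Suc k) < min (r/2) \<rho>" using k by (simp add: inverse_eq_divide)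
    then have "\<delta> < min (r/2) \<rho>" using d by linarith
    then have d1: "0 < 2*\<delta>" "2*\<delta> < r" "\<delta> < \<rho>" using d by auto
    have "ereal (\<delta> powr (-t)) \<le> ereal ((2*\<delta>) powr (-t'))" using \<rho>(2) d d1 by simp
    also have "\<dots> < covnum M d (2*\<delta>) S" using r(2) d1 by blast
    finally show "covnum M d (2*\<delta>) S > ereal (\<delta> powr (-t))" .
  qed
qed

lemma UGOOD:
  assumes "S \<noteq> {}" "ereal t' < upper_box_dim M d S" "t < t'"
  shows "\<forall>r>0. \<exists>\<delta>. 0 < \<delta> \<and> \<delta> < r \<and> covnum M d (2*\<delta>) S > ereal (\<delta> powr (-t))"
proof (intro allI impI)
  fix r :: real assume "r > 0"
  obtain \<rho> where \<rho>: "\<rho> > 0" "\<forall>\<delta>. 0 < \<delta> \<and> \<delta> < \<rho> \<longrightarrow> 1 * \<delta> powr (-t) \<le> (2*\<delta>) powr (-t')"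
    using SC[OF assms(3), of 2 1] by auto
  have "2 * min r \<rho> > 0" using \<open>r > 0\<close> \<rho> by simp
  then obtain \<delta>0 where d0: "0 < \<delta>0" "\<delta>0 < 2 * min r \<rho>" "covnum M d \<delta>0 S > ereal (\<delta>0 powr (-t'))"
    using U1[OF assms(1,2)] by blast
  define \<delta> where "\<delta> = \<delta>0 / 2"
  have d: "0 < \<delta>" "\<delta> < r" "\<delta> < \<rho>" "2*\<delta> = \<delta>0" using d0 unfolding \<delta>_def by auto
  have "\<delta> powr (-t) \<le> (2*\<delta>) powr (-t')" using \<rho>(2) d(1,3) by auto
  then have "ereal (\<delta> powr (-t)) \<le> ereal ((2*\<delta>) powr (-t'))" by simp
  also have "\<dots> < covnum M d (2*\<delta>) S" using d0 d(4) by simp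
  finally show "\<exists>\<delta>. 0 < \<delta> \<and> \<delta> < r \<and> covnum M d (2*\<delta>) S > ereal (\<delta> powr (-t))" using d by blast
qed

lemma COMB_pt:
  assumes msX: "Metric_space X dX" and msY: "Metric_space Y dY"
    and EXY: "E \<subseteq> X \<times> Y" and AX: "A \<subseteq> X" and \<delta>: "\<delta> > 0"
    and hA: "covnum X dX (2*\<delta>) A > ereal (\<delta> powr (-s))"
    and hS: "\<forall>x\<in>A. covnum Y dY (2*\<delta>) {y. (x,y) \<in> E} > ereal (\<delta> powr (-t))"
  shows "covnum (X \<times> Y) (max_metric dX dY) \<delta> E > ereal (\<delta> powr (-(s+t)))"
proof -
  have "\<delta> powr (-(s+t)) = \<delta> powr (-s) * \<delta> powr (-t)" using \<delta> by (simp add: powr_add[symmetric])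
  then show ?thesis using PL[OF msX msY EXY AX \<delta> _ _ hA hS] by simp
qed

lemma COMB:
  assumes msX: "Metric_space X dX" and msY: "Metric_space Y dY"
    and EXY: "E \<subseteq> X \<times> Y" and AX: "A \<subseteq> X" and "A \<noteq> {}" and r1: "r1 > 0" and r2: "r2 > 0"
    and hA: "\<forall>\<delta>. 0 < \<delta> \<and> \<delta> < r1 \<longrightarrow> covnum X dX (2*\<delta>) A > ereal (\<delta> powr (-s))"
    and hS: "\<forall>x\<in>A. \<forall>\<delta>. 0 < \<delta> \<and> \<delta> < r2 \<longrightarrow> covnum Y dY (2*\<delta>) {y. (x,y) \<in> E} > ereal (\<delta> powr (-t))"
  shows "E \<noteq> {} \<and> ereal (s+t) \<le> lower_box_dim (X \<times> Y) (max_metric dX dY) E"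
proof -
  have pt: "covnum (X \<times> Y) (max_metric dX dY) \<delta> E > ereal (\<delta> powr (-(s+t)))" if "0 < \<delta>" "\<delta> < min r1 r2" for \<delta>
    using COMB_pt[OF msX msY EXY AX \<open>0 < \<delta>\<close>] hA hS that by auto
  have "min r1 r2 / 2 > 0" "min r1 r2 / 2 < min r1 r2" using r1 r2 by auto
  then have "E \<noteq> {}" using pt covnum_pos_nonempty by blast
  moreover have "ereal (s+t) \<le> lower_box_dim (X \<times> Y) (max_metric dX dY) E"
    by (rule L2[OF \<open>E \<noteq> {}\<close>, of "min r1 r2"]) (use r1 r2 pt in \<open>auto intro: less_imp_le\<close>)
  ultimately show ?thesis by blast
qed

lemma COMBU:
  assumes msX: "Metric_space X dX" and msY: "Metric_space Y dY"
    and EXY: "E \<subseteq> X \<times> Y" and AX: "A \<subseteq> X" and r2: "r2 > 0"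
    and hA: "\<forall>r>0. \<exists>\<delta>. 0 < \<delta> \<and> \<delta> < r \<and> covnum X dX (2*\<delta>) A > ereal (\<delta> powr (-s))"
    and hS: "\<forall>x\<in>A. \<forall>\<delta>. 0 < \<delta> \<and> \<delta> < r2 \<longrightarrow> covnum Y dY (2*\<delta>) {y. (x,y) \<in> E} > ereal (\<delta> powr (-t))"
  shows "\<forall>r>0. \<exists>\<delta>. 0 < \<delta> \<and> \<delta> < r \<and> covnum (X \<times> Y) (max_metric dX dY) \<delta> E > ereal (\<delta> powr (-(s+t)))"
proof (intro allI impI)
  fix r :: real assume "r > 0"
  then obtain \<delta> where d: "0 < \<delta>" "\<delta> < min r r2" "covnum X dX (2*\<delta>) A > ereal (\<delta> powr (-s))"
    using hA r2 by (metis min_less_iff_conj)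
  then have "covnum (X \<times> Y) (max_metric dX dY) \<delta> E > ereal (\<delta> powr (-(s+t)))"
    using COMB_pt[OF msX msY EXY AX \<open>0 < \<delta>\<close>] hS by auto
  then show "\<exists>\<delta>. 0 < \<delta> \<and> \<delta> < r \<and> covnum (X \<times> Y) (max_metric dX dY) \<delta> E > ereal (\<delta> powr (-(s+t)))"
    using d by auto
qed

lemma EE:
  fixes a b c :: ereal
  assumes "b \<ge> 0" "c \<ge> 0" "\<And>s t. ereal s < b \<Longrightarrow> ereal t < c \<Longrightarrow> ereal (s+t) \<le> a"
  shows "b + c \<le> a"
proof (rule ccontr)
  assume "\<not> ?thesis"
  then have lt: "a < b + c" by simp
  show False
  proof (cases a)
    case MInf
    have "ereal (-1) < b" by (rule less_le_trans[OF _ assms(1)]) simp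
    moreover have "ereal (-1) < c" by (rule less_le_trans[OF _ assms(2)]) simp
    ultimately have "ereal (-1 + -1) \<le> a" by (intro assms(3))
    then show False using MInf by simp
  next
    case PInf then show False using lt by simp
  next
    case (real x)
    then obtain s t where "ereal s < b" "ereal t < c" "x < s + t"
    proof -
      have "ereal x - c < b" using lt real assms(1,2)
        by (cases b; cases c) (auto simp: algebra_simps)
      then obtain s where s: "ereal x - c < ereal s" "ereal s < b" using ereal_dense2 by blast
      then have "ereal (x - s) < c" using assms(2) by (cases c) auto
      then obtain t where t: "ereal (x - s) < ereal t" "ereal t < c" using ereal_dense2 by blast
      then have "x < s + t" by simp
      then show ?thesis using that s t by blast
    qed
    then show False using assms(3)[of s t] real by simp
  qed
qed



lemma lpd_nonneg: assumes "M \<noteq> {}" shows "lower_packing_dim M d M \<ge> 0"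
  unfolding lower_packing_dim_def
proof (rule Inf_greatest)
  fix z assume "z \<in> {(SUP n\<in>{n. En n \<noteq> {}}. lower_box_dim M d (En n)) | En :: nat \<Rightarrow> 'a set.
       (\<forall>n. En n \<subseteq> M) \<and> M \<subseteq> (\<Union>n. En n)}"
  then obtain En :: "nat \<Rightarrow> 'a set" where z: "z = (SUP n\<in>{n. En n \<noteq> {}}. lower_box_dim M d (En n))" "M \<subseteq> (\<Union>n. En n)" by blast
  obtain n where "En n \<noteq> {}" using z(2) assms by blast
  then show "0 \<le> z" unfolding z(1) by (intro SUP_upper2[of n]) (auto intro: lbd_nonneg)
qed

lemma pd_nonneg: assumes "M \<noteq> {}" shows "packing_dim M d M \<ge> 0"
  unfolding packing_dim_def
proof (rule Inf_greatest)
  fix z assume "z \<in> {(SUP n\<in>{n. En n \<noteq> {}}. upper_box_dim M d (En n)) | En :: nat \<Rightarrow> 'a set.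
       (\<forall>n. En n \<subseteq> M) \<and> M \<subseteq> (\<Union>n. En n)}"
  then obtain En :: "nat \<Rightarrow> 'a set" where z: "z = (SUP n\<in>{n. En n \<noteq> {}}. upper_box_dim M d (En n))" "M \<subseteq> (\<Union>n. En n)" by blast
  obtain n where "En n \<noteq> {}" using z(2) assms by blast
  then show "0 \<le> z" unfolding z(1) by (intro SUP_upper2[of n]) (auto intro: ubd_nonneg)
qed

lemma dlpd_nonneg: assumes "M \<noteq> {}" shows "directed_lower_packing_dim M d M \<ge> 0"
  unfolding directed_lower_packing_dim_def
proof (rule Inf_greatest)
  fix z assume "z \<in> {(SUP n\<in>{n. En n \<noteq> {}}. lower_box_dim M d (En n)) | En :: nat \<Rightarrow> 'a set.
       incseq En \<and> (\<Union>n. En n) = M}"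
  then obtain En :: "nat \<Rightarrow> 'a set" where z: "z = (SUP n\<in>{n. En n \<noteq> {}}. lower_box_dim M d (En n))" "M = (\<Union>n. En n)" by blast
  obtain n where "En n \<noteq> {}" using z(2) assms by blast
  then show "0 \<le> z" unfolding z(1) by (intro SUP_upper2[of n]) (auto intro: lbd_nonneg)
qed

lemma lpd_less:
  fixes En :: "nat \<Rightarrow> 'a set"
  assumes "ereal s < lower_packing_dim M d E" "\<forall>n. En n \<subseteq> M" "E \<subseteq> (\<Union>n. En n)"
  shows "\<exists>n. En n \<noteq> {} \<and> ereal s < lower_box_dim M d (En n)"
proof -
  have "lower_packing_dim M d E \<le> (SUP n\<in>{n. En n \<noteq> {}}. lower_box_dim M d (En n))"
    unfolding lower_packing_dim_def by (rule Inf_lower) (use assms in \<open>auto intro!: exI[of _ En]\<close>)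
  then have "ereal s < (SUP n\<in>{n. En n \<noteq> {}}. lower_box_dim M d (En n))" using assms(1) by simp
  then show ?thesis unfolding less_SUP_iff by blast
qed

lemma pd_less:
  fixes En :: "nat \<Rightarrow> 'a set"
  assumes "ereal s < packing_dim M d E" "\<forall>n. En n \<subseteq> M" "E \<subseteq> (\<Union>n. En n)"
  shows "\<exists>n. En n \<noteq> {} \<and> ereal s < upper_box_dim M d (En n)"
proof -
  have "packing_dim M d E \<le> (SUP n\<in>{n. En n \<noteq> {}}. upper_box_dim M d (En n))"
    unfolding packing_dim_def by (rule Inf_lower) (use assms in \<open>auto intro!: exI[of _ En]\<close>)
  then have "ereal s < (SUP n\<in>{n. En n \<noteq> {}}. upper_box_dim M d (En n))" using assms(1) by simp
  then show ?thesis unfolding less_SUP_iff by blast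
qed

lemma dlpd_less:
  fixes En :: "nat \<Rightarrow> 'a set"
  assumes "ereal s < directed_lower_packing_dim M d E" "incseq En" "(\<Union>n. En n) = E"
  shows "\<exists>n. En n \<noteq> {} \<and> ereal s < lower_box_dim M d (En n)"
proof -
  have "directed_lower_packing_dim M d E \<le> (SUP n\<in>{n. En n \<noteq> {}}. lower_box_dim M d (En n))"
    unfolding directed_lower_packing_dim_def by (rule Inf_lower) (use assms in blast)
  then have "ereal s < (SUP n\<in>{n. En n \<noteq> {}}. lower_box_dim M d (En n))" using assms(1) by simp
  then show ?thesis unfolding less_SUP_iff by blast
qed



lemma part_iii:
  fixes X :: "'a set" and dX :: "'a \<Rightarrow> 'a \<Rightarrow> real"
    and Y :: "'b set" and dY :: "'b \<Rightarrow> 'b \<Rightarrow> real"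
  assumes msX: "Metric_space X dX" and msY: "Metric_space Y dY"
    and XY: "X \<noteq> {}" "Y \<noteq> {}"
  shows "lower_packing_dim X dX X + lower_packing_dim Y dY Y \<le> lower_packing_dim (X \<times> Y) (max_metric dX dY) (X \<times> Y)"
proof -
  have key: "lower_packing_dim X dX X + lower_packing_dim Y dY Y
      \<le> (SUP n\<in>{n. En n \<noteq> {}}. lower_box_dim (X \<times> Y) (max_metric dX dY) (En n))"
    if cov: "\<forall>n. En n \<subseteq> X \<times> Y" "X \<times> Y \<subseteq> (\<Union>n. En n)" for En :: "nat \<Rightarrow> ('a \<times> 'b) set"
  proof (rule EE[OF lpd_nonneg[OF XY(1)] lpd_nonneg[OF XY(2)]])
    fix s t assume s: "ereal s < lower_packing_dim X dX X" and t: "ereal t < lower_packing_dim Y dY Y"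
    obtain t' where t': "ereal t < ereal t'" "ereal t' < lower_packing_dim Y dY Y" using ereal_dense2[OF t] by blast
    obtain s' where s': "ereal s < ereal s'" "ereal s' < lower_packing_dim X dX X" using ereal_dense2[OF s] by blast
    define sl where "sl n x = {y. (x,y) \<in> En n}" for n x
    have slice: "\<exists>n k. \<forall>\<delta>. 0 < \<delta> \<and> \<delta> < 1 / real (Suc k) \<longrightarrow> covnum Y dY (2*\<delta>) (sl n x) > ereal (\<delta> powr (-t))"
      if "x \<in> X" for x
    proof -
      have "\<forall>n. sl n x \<subseteq> Y" "Y \<subseteq> (\<Union>n. sl n x)" using cov that by (auto simp: sl_def)
      from lpd_less[OF t'(2) this] obtain n where n: "sl n x \<noteq> {}" "ereal t' < lower_box_dim Y dY (sl n x)" by blast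
      have "t < t'" using t'(1) by simp
      from LGOOD[OF n this] show ?thesis by blast
    qed
    define G where "G n k = {x\<in>X. \<forall>\<delta>. 0 < \<delta> \<and> \<delta> < 1 / real (Suc k) \<longrightarrow> covnum Y dY (2*\<delta>) (sl n x) > ereal (\<delta> powr (-t))}" for n k
    define H where "H m = G (fst (prod_decode m)) (snd (prod_decode m))" for m
    have "\<forall>m. H m \<subseteq> X" unfolding H_def G_def by auto
    moreover have "X \<subseteq> (\<Union>m. H m)"
    proof
      fix x assume "x \<in> X"
      then obtain n k where "\<forall>\<delta>. 0 < \<delta> \<and> \<delta> < 1 / real (Suc k) \<longrightarrow> covnum Y dY (2*\<delta>) (sl n x) > ereal (\<delta> powr (-t))"
        using slice by blast
      then have "x \<in> H (prod_encode (n,k))" unfolding H_def G_def using \<open>x \<in> X\<close> by simp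
      then show "x \<in> (\<Union>m. H m)" by blast
    qed
    ultimately obtain m where m: "H m \<noteq> {}" "ereal s' < lower_box_dim X dX (H m)" using lpd_less[OF s'(2)] by blast
    obtain k' where k': "\<forall>\<delta>. 0 < \<delta> \<and> \<delta> < 1 / real (Suc k') \<longrightarrow> covnum X dX (2*\<delta>) (H m) > ereal (\<delta> powr (-s))"
      using LGOOD[OF m, of s] s'(1) by auto
    define n where "n = fst (prod_decode m)"
    define k where "k = snd (prod_decode m)"
    have HG: "H m = G n k" unfolding H_def n_def k_def ..
    have "En n \<noteq> {} \<and> ereal (s+t) \<le> lower_box_dim (X \<times> Y) (max_metric dX dY) (En n)"
    proof (rule COMB[OF msX msY])
      show "En n \<subseteq> X \<times> Y" using cov by blast
      show "H m \<subseteq> X" "H m \<noteq> {}" using m(1) unfolding HG G_def by auto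
      show "(0::real) < 1 / real (Suc k')" "(0::real) < 1 / real (Suc k)" by auto
      show "\<forall>\<delta>. 0 < \<delta> \<and> \<delta> < 1 / real (Suc k') \<longrightarrow> covnum X dX (2*\<delta>) (H m) > ereal (\<delta> powr (-s))" by (rule k')
      show "\<forall>x\<in>H m. \<forall>\<delta>. 0 < \<delta> \<and> \<delta> < 1 / real (Suc k) \<longrightarrow> covnum Y dY (2*\<delta>) {y. (x,y) \<in> En n} > ereal (\<delta> powr (-t))"
        unfolding HG G_def sl_def by blast
    qed
    then show "ereal (s+t) \<le> (SUP n\<in>{n. En n \<noteq> {}}. lower_box_dim (X \<times> Y) (max_metric dX dY) (En n))"
      by (intro SUP_upper2[of n]) auto
  qed
  show ?thesis unfolding lower_packing_dim_def[of "X \<times> Y"] by (rule Inf_greatest) (use key in auto)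
qed



lemma Gmono_aux:
  assumes "incseq En" "n \<le> n'" "k \<le> k'"
    "\<forall>\<delta>. 0 < \<delta> \<and> \<delta> < 1 / real (Suc k) \<longrightarrow> covnum Y dY (2*\<delta>) {y. (x,y) \<in> En n} > ereal (\<delta> powr (-t))"
  shows "\<forall>\<delta>. 0 < \<delta> \<and> \<delta> < 1 / real (Suc k') \<longrightarrow> covnum Y dY (2*\<delta>) {y. (x,y) \<in> En n'} > ereal (\<delta> powr (-t))"
proof (intro allI impI)
  fix \<delta> :: real assume d: "0 < \<delta> \<and> \<delta> < 1 / real (Suc k')"
  have "1 / real (Suc k') \<le> 1 / real (Suc k)" using assms(3) by (simp add: frac_le)
  then have "ereal (\<delta> powr (-t)) < covnum Y dY (2*\<delta>) {y. (x,y) \<in> En n}" using assms(4) d by auto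
  also have "\<dots> \<le> covnum Y dY (2*\<delta>) {y. (x,y) \<in> En n'}"
    using assms(1,2) by (intro covnum_mono) (auto simp: incseq_def)
  finally show "covnum Y dY (2*\<delta>) {y. (x,y) \<in> En n'} > ereal (\<delta> powr (-t))" .
qed

lemma part_ii:
  fixes X :: "'a set" and dX :: "'a \<Rightarrow> 'a \<Rightarrow> real"
    and Y :: "'b set" and dY :: "'b \<Rightarrow> 'b \<Rightarrow> real"
  assumes msX: "Metric_space X dX" and msY: "Metric_space Y dY"
    and XY: "X \<noteq> {}" "Y \<noteq> {}"
  shows "directed_lower_packing_dim X dX X + directed_lower_packing_dim Y dY Y
     \<le> directed_lower_packing_dim (X \<times> Y) (max_metric dX dY) (X \<times> Y)"
proof -
  have key: "directed_lower_packing_dim X dX X + directed_lower_packing_dim Y dY Y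
      \<le> (SUP n\<in>{n. En n \<noteq> {}}. lower_box_dim (X \<times> Y) (max_metric dX dY) (En n))"
    if cov: "incseq En" "(\<Union>n. En n) = X \<times> Y" for En :: "nat \<Rightarrow> ('a \<times> 'b) set"
  proof (rule EE[OF dlpd_nonneg[OF XY(1)] dlpd_nonneg[OF XY(2)]])
    fix s t assume s: "ereal s < directed_lower_packing_dim X dX X" and t: "ereal t < directed_lower_packing_dim Y dY Y"
    obtain t' where t': "ereal t < ereal t'" "ereal t' < directed_lower_packing_dim Y dY Y" using ereal_dense2[OF t] by blast
    obtain s' where s': "ereal s < ereal s'" "ereal s' < directed_lower_packing_dim X dX X" using ereal_dense2[OF s] by blast
    have EnXY: "En n \<subseteq> X \<times> Y" for n using cov(2) by blast
    define sl where "sl n x = {y. (x,y) \<in> En n}" for n x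
    have slice: "\<exists>n k. \<forall>\<delta>. 0 < \<delta> \<and> \<delta> < 1 / real (Suc k) \<longrightarrow> covnum Y dY (2*\<delta>) (sl n x) > ereal (\<delta> powr (-t))"
      if "x \<in> X" for x
    proof -
      have "incseq (\<lambda>n. sl n x)" using cov(1) unfolding incseq_def sl_def by blast
      moreover have "(\<Union>n. sl n x) = Y" using cov(2) that unfolding sl_def by blast
      ultimately obtain n where n: "sl n x \<noteq> {}" "ereal t' < lower_box_dim Y dY (sl n x)"
        using dlpd_less[OF t'(2)] by blast
      have "t < t'" using t'(1) by simp
      from LGOOD[OF n this] show ?thesis by blast
    qed
    define G where "G n k = {x\<in>X. \<forall>\<delta>. 0 < \<delta> \<and> \<delta> < 1 / real (Suc k) \<longrightarrow> covnum Y dY (2*\<delta>) (sl n x) > ereal (\<delta> powr (-t))}" for n k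
    have Gmono: "G n k \<subseteq> G n' k'" if "n \<le> n'" "k \<le> k'" for n n' k k'
      using Gmono_aux[OF cov(1) that] unfolding G_def sl_def by blast
    define H where "H m = G m m" for m
    have "incseq H" unfolding incseq_def H_def using Gmono by blast
    moreover have "(\<Union>m. H m) = X"
    proof
      show "(\<Union>m. H m) \<subseteq> X" unfolding H_def G_def by auto
      show "X \<subseteq> (\<Union>m. H m)"
      proof
        fix x assume "x \<in> X"
        then obtain n k where "\<forall>\<delta>. 0 < \<delta> \<and> \<delta> < 1 / real (Suc k) \<longrightarrow> covnum Y dY (2*\<delta>) (sl n x) > ereal (\<delta> powr (-t))"
          using slice by blast
        then have "x \<in> G n k" unfolding G_def using \<open>x \<in> X\<close> by simp
        then have "x \<in> H (max n k)" unfolding H_def using Gmono[of n "max n k" k "max n k"] by auto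
        then show "x \<in> (\<Union>m. H m)" by blast
      qed
    qed
    ultimately obtain m where m: "H m \<noteq> {}" "ereal s' < lower_box_dim X dX (H m)" using dlpd_less[OF s'(2)] by blast
    obtain k' where k': "\<forall>\<delta>. 0 < \<delta> \<and> \<delta> < 1 / real (Suc k') \<longrightarrow> covnum X dX (2*\<delta>) (H m) > ereal (\<delta> powr (-s))"
      using LGOOD[OF m, of s] s'(1) by auto
    have "En m \<noteq> {} \<and> ereal (s+t) \<le> lower_box_dim (X \<times> Y) (max_metric dX dY) (En m)"
    proof (rule COMB[OF msX msY])
      show "En m \<subseteq> X \<times> Y" using EnXY .
      show "H m \<subseteq> X" "H m \<noteq> {}" using m(1) unfolding H_def G_def by auto
      show "(0::real) < 1 / real (Suc k')" "(0::real) < 1 / real (Suc m)" by auto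
      show "\<forall>\<delta>. 0 < \<delta> \<and> \<delta> < 1 / real (Suc k') \<longrightarrow> covnum X dX (2*\<delta>) (H m) > ereal (\<delta> powr (-s))" by (rule k')
      show "\<forall>x\<in>H m. \<forall>\<delta>. 0 < \<delta> \<and> \<delta> < 1 / real (Suc m) \<longrightarrow> covnum Y dY (2*\<delta>) {y. (x,y) \<in> En m} > ereal (\<delta> powr (-t))"
        unfolding H_def G_def sl_def by blast
    qed
    then show "ereal (s+t) \<le> (SUP n\<in>{n. En n \<noteq> {}}. lower_box_dim (X \<times> Y) (max_metric dX dY) (En n))"
      by (intro SUP_upper2[of m]) auto
  qed
  show ?thesis unfolding directed_lower_packing_dim_def[of "X \<times> Y"] by (rule Inf_greatest) (use key in auto)
qed



lemma covnum_ge_nonempty: assumes "covnum M d \<delta> S \<ge> ereal (c powr e)" "c > 0" shows "S \<noteq> {}"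
proof
  assume "S = {}"
  then have "ereal (c powr e) \<le> ereal 0" using assms covnum_empty[of M d \<delta>] by (simp add: zero_ereal_def)
  then show False using assms(2) by simp
qed

lemma part_i:
  fixes X :: "'a set" and dX :: "'a \<Rightarrow> 'a \<Rightarrow> real"
    and Y :: "'b set" and dY :: "'b \<Rightarrow> 'b \<Rightarrow> real"
  assumes msX: "Metric_space X dX" and msY: "Metric_space Y dY"
    and XY: "X \<noteq> {}" "Y \<noteq> {}"
  shows "packing_dim X dX X + directed_lower_packing_dim Y dY Y
     \<le> packing_dim (X \<times> Y) (max_metric dX dY) (X \<times> Y)"
proof -
  have key: "packing_dim X dX X + directed_lower_packing_dim Y dY Y
      \<le> (SUP n\<in>{n. En n \<noteq> {}}. upper_box_dim (X \<times> Y) (max_metric dX dY) (En n))"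
    if cov: "\<forall>n. En n \<subseteq> X \<times> Y" "X \<times> Y \<subseteq> (\<Union>n. En n)" for En :: "nat \<Rightarrow> ('a \<times> 'b) set"
  proof (rule EE[OF pd_nonneg[OF XY(1)] dlpd_nonneg[OF XY(2)]])
    fix s t assume s: "ereal s < packing_dim X dX X" and t: "ereal t < directed_lower_packing_dim Y dY Y"
    obtain t' where t': "ereal t < ereal t'" "ereal t' < directed_lower_packing_dim Y dY Y" using ereal_dense2[OF t] by blast
    obtain s' where s': "ereal s < ereal s'" "ereal s' < packing_dim X dX X" using ereal_dense2[OF s] by blast
    obtain s1 where s1: "ereal s < ereal s1" "ereal s1 < ereal s'" using ereal_dense2[OF s'(1)] by blast
    define F where "F n = (\<Union>j\<in>{..n}. En j)" for n
    have incF: "incseq F" unfolding incseq_def F_def by (auto intro: order_trans)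
    have FXY: "F n \<subseteq> X \<times> Y" for n using cov(1) unfolding F_def by blast
    define sl where "sl n x = {y. (x,y) \<in> F n}" for n x
    have slice: "\<exists>n k. \<forall>\<delta>. 0 < \<delta> \<and> \<delta> < 1 / real (Suc k) \<longrightarrow> covnum Y dY (2*\<delta>) (sl n x) > ereal (\<delta> powr (-t))"
      if xX: "x \<in> X" for x
    proof -
      have "incseq (\<lambda>n. sl n x)" using incF unfolding incseq_def sl_def by blast
      moreover have "(\<Union>n. sl n x) = Y"
      proof
        show "(\<Union>n. sl n x) \<subseteq> Y" using FXY unfolding sl_def by blast
        show "Y \<subseteq> (\<Union>n. sl n x)"
        proof
          fix y assume "y \<in> Y"
          then obtain j where "(x,y) \<in> En j" using cov(2) xX by blast
          then have "y \<in> sl j x" unfolding sl_def F_def by blast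
          then show "y \<in> (\<Union>n. sl n x)" by blast
        qed
      qed
      ultimately obtain n where n: "sl n x \<noteq> {}" "ereal t' < lower_box_dim Y dY (sl n x)"
        using dlpd_less[OF t'(2)] by blast
      have "t < t'" using t'(1) by simp
      from LGOOD[OF n this] show ?thesis by blast
    qed
    define G where "G n k = {x\<in>X. \<forall>\<delta>. 0 < \<delta> \<and> \<delta> < 1 / real (Suc k) \<longrightarrow> covnum Y dY (2*\<delta>) (sl n x) > ereal (\<delta> powr (-t))}" for n k
    have Gmono: "G n k \<subseteq> G n' k'" if "n \<le> n'" "k \<le> k'" for n n' k k'
      using Gmono_aux[OF incF that] unfolding G_def sl_def by blast
    define H where "H m = G m m" for m
    have "\<forall>m. H m \<subseteq> X" unfolding H_def G_def by auto
    moreover have "X \<subseteq> (\<Union>m. H m)"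
    proof
      fix x assume "x \<in> X"
      then obtain n k where "\<forall>\<delta>. 0 < \<delta> \<and> \<delta> < 1 / real (Suc k) \<longrightarrow> covnum Y dY (2*\<delta>) (sl n x) > ereal (\<delta> powr (-t))"
        using slice by blast
      then have "x \<in> G n k" unfolding G_def using \<open>x \<in> X\<close> by simp
      then have "x \<in> H (max n k)" unfolding H_def using Gmono[of n "max n k" k "max n k"] by auto
      then show "x \<in> (\<Union>m. H m)" by blast
    qed
    ultimately obtain m where m: "H m \<noteq> {}" "ereal s' < upper_box_dim X dX (H m)" using pd_less[OF s'(2)] by blast
    have "s1 < s'" using s1 by simp
    from UGOOD[OF m this]
    have hA: "\<forall>r>0. \<exists>\<delta>. 0 < \<delta> \<and> \<delta> < r \<and> covnum X dX (2*\<delta>) (H m) > ereal (\<delta> powr (-s1))" .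
    have freq: "\<forall>r>0. \<exists>\<delta>. 0 < \<delta> \<and> \<delta> < r \<and> covnum (X \<times> Y) (max_metric dX dY) \<delta> (F m) > ereal (\<delta> powr (-(s1+t)))"
    proof (rule COMBU[OF msX msY FXY _ _ hA])
      show "H m \<subseteq> X" unfolding H_def G_def by auto
      show "(0::real) < 1 / real (Suc m)" by auto
      show "\<forall>x\<in>H m. \<forall>\<delta>. 0 < \<delta> \<and> \<delta> < 1 / real (Suc m) \<longrightarrow> covnum Y dY (2*\<delta>) {y. (x,y) \<in> F m} > ereal (\<delta> powr (-t))"
        unfolding H_def G_def sl_def by blast
    qed
    have "s + t < s1 + t" using s1 by simp
    from SC[OF this, of 1 "real (Suc m)"]
    obtain \<rho> where \<rho>: "\<rho> > 0" "\<forall>\<delta>. 0 < \<delta> \<and> \<delta> < \<rho> \<longrightarrow> real (Suc m) * \<delta> powr (-(s+t)) \<le> (1*\<delta>) powr (-(s1+t))"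
      by auto
    have "\<exists>j\<in>{..m}. \<forall>r>0. \<exists>\<delta>. 0 < \<delta> \<and> \<delta> < r \<and> covnum (X \<times> Y) (max_metric dX dY) \<delta> (En j) \<ge> ereal (\<delta> powr (-(s+t)))"
    proof (rule ccontr)
      assume "\<not> ?thesis"
      then have "\<forall>j\<in>{..m}. \<exists>r>0. \<forall>\<delta>. 0 < \<delta> \<and> \<delta> < r \<longrightarrow> covnum (X \<times> Y) (max_metric dX dY) \<delta> (En j) < ereal (\<delta> powr (-(s+t)))"
        by (metis not_le)
      from bchoice[OF this] obtain R where R: "\<forall>j\<in>{..m}. R j > 0 \<and> (\<forall>\<delta>. 0 < \<delta> \<and> \<delta> < R j \<longrightarrow> covnum (X \<times> Y) (max_metric dX dY) \<delta> (En j) < ereal (\<delta> powr (-(s+t))))"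
        by (elim exE)
      define Rm where "Rm = Min (R ` {..m})"
      have "Rm > 0" unfolding Rm_def using R by (subst Min_gr_iff) auto
      have Rm_le: "Rm \<le> R j" if "j \<in> {..m}" for j unfolding Rm_def using that by (intro Min_le) auto
      obtain \<delta> where d: "0 < \<delta>" "\<delta> < min Rm \<rho>" "covnum (X \<times> Y) (max_metric dX dY) \<delta> (F m) > ereal (\<delta> powr (-(s1+t)))"
        using freq \<open>Rm > 0\<close> \<rho>(1) by (metis min_less_iff_conj)
      have "\<forall>j\<in>{..m}. covnum (X \<times> Y) (max_metric dX dY) \<delta> (En j) < ereal (\<delta> powr (-(s+t)))"
        using R Rm_le d by force
      from FU[OF _ this] have "covnum (X \<times> Y) (max_metric dX dY) \<delta> (F m) \<le> ereal (real (card {..m}) * \<delta> powr (-(s+t)))"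
        unfolding F_def by simp
      also have "\<dots> \<le> ereal (\<delta> powr (-(s1+t)))" using \<rho>(2) d by auto
      finally show False using d(3) by simp
    qed
    then obtain j where j: "\<forall>r>0. \<exists>\<delta>. 0 < \<delta> \<and> \<delta> < r \<and> covnum (X \<times> Y) (max_metric dX dY) \<delta> (En j) \<ge> ereal (\<delta> powr (-(s+t)))"
      by blast
    obtain \<delta>1 where "0 < \<delta>1" "covnum (X \<times> Y) (max_metric dX dY) \<delta>1 (En j) \<ge> ereal (\<delta>1 powr (-(s+t)))"
      using j by (meson zero_less_one)
    then have ne: "En j \<noteq> {}" using covnum_ge_nonempty by blast
    have "ereal (s+t) \<le> upper_box_dim (X \<times> Y) (max_metric dX dY) (En j)" using U2[OF ne j] .
    then show "ereal (s+t) \<le> (SUP n\<in>{n. En n \<noteq> {}}. upper_box_dim (X \<times> Y) (max_metric dX dY) (En n))"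
      using ne by (intro SUP_upper2[of j]) auto
  qed
  show ?thesis unfolding packing_dim_def[of "X \<times> Y"] by (rule Inf_greatest) (use key in auto)
qed


theorem corollary4p5:
  fixes X :: "'a set" and dX :: "'a \<Rightarrow> 'a \<Rightarrow> real"
    and Y :: "'b set" and dY :: "'b \<Rightarrow> 'b \<Rightarrow> real"
  assumes "Metric_space X dX" and "Metric_space Y dY"
    and "X \<noteq> {}" and "Y \<noteq> {}"
  shows "(packing_dim (X \<times> Y) (max_metric dX dY) (X \<times> Y)
           \<ge> packing_dim X dX X + directed_lower_packing_dim Y dY Y)
     \<and> (directed_lower_packing_dim (X \<times> Y) (max_metric dX dY) (X \<times> Y)
           \<ge> directed_lower_packing_dim X dX X + directed_lower_packing_dim Y dY Y)
     \<and> (lower_packing_dim (X \<times> Y) (max_metric dX dY) (X \<times> Y)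
           \<ge> lower_packing_dim X dX X + lower_packing_dim Y dY Y)"
  using part_i[OF assms] part_ii[OF assms] part_iii[OF assms] by blast

end
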